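(* Assume $\operatorname{tr}(CH^{-1})>0$ and $\theta_0\ne\theta_*$. Let $N\ge1$, $\alpha=\min\Big\{\frac{\|\theta_0-\theta_*\|}{\sqrt{L\operatorname{tr}(CH^{-1})}\,N},\frac1L\Big\}$ and $\beta=\min\{N\alpha,1/L\}$, and run the noisy algorithm with these parameters. Then $$\mathbb{E}f(\theta_N)-f(\theta_* )\le\max\Big\{\frac{5\operatorname{tr}(CH^{-1})}{N},\ \frac{5\sqrt{\operatorname{tr}(CH^{-1})L}\,\|\theta_0-\theta_*\|}{N},\ \frac{2L\|\theta_0-\theta_*\|^2}{N^2}\Big\}.$$
   Context: Let $H\in\mathbb{R}^{d\times d}$ be symmetric positive definite with largest eigenvalue $L$, $q\in\mathbb{R}^d$, $f(\theta)=\frac12\langle\theta,H\theta\rangle-\langle q,\theta\rangle$, $\theta_*=H^{-1}q$. Let $(\varepsilon_n)_{n\ge2}$ be random vectors in $\mathbb{R}^d$ with $\mathbb{E}\varepsilon_n=0$, $\mathbb{E}[\varepsilon_n\varepsilon_m^\top]=0$ for $n\neq m$, and $\mathbb{E}[\varepsilon_n\varepsilon_n^\top]=C$ for all $n$, for a fixed positive semidefinite $C$. The noisy algorithm with parameters $\alpha,\beta$: given deterministic $\theta_0$, set $\theta_1=\theta_0$ and for $n\ge1$ $$\theta_{n+1}=\frac{2n}{n+1}\theta_n-\frac{n-1}{n+1}\theta_{n-1}-\frac{1}{n+1}\Big(n(\alpha+\beta)H(\theta_n-\theta_* )-(n-1)\beta H(\theta_{n-1}-\theta_* )-(n\alpha+\beta)\varepsilon_{n+1}\Big).$$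 *)

theory Defs
  imports "HOL-Probability.Probability"
begin

definition quad_obj :: "real^'d^'d \<Rightarrow> real^'d \<Rightarrow> real^'d \<Rightarrow> real" where
  "quad_obj H q th = (1/2) * (th \<bullet> (H *v th)) - q \<bullet> th"

definition is_largest_eigenvalue :: "real^'d^'d \<Rightarrow> real \<Rightarrow> bool" where
  "is_largest_eigenvalue H L \<longleftrightarrow>
     (\<exists>v. v \<noteq> 0 \<and> H *v v = L *\<^sub>R v) \<and>
     (\<forall>mu v. v \<noteq> 0 \<and> H *v v = mu *\<^sub>R v \<longrightarrow> mu \<le> L)"

fun noisy_alg :: "real^'d^'d \<Rightarrow> real^'d \<Rightarrow> real \<Rightarrow> real \<Rightarrow> real^'d \<Rightarrow> (nat \<Rightarrow> real^'d)
                  \<Rightarrow> nat \<Rightarrow> real^'d" where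
  "noisy_alg H ts a b th0 e 0 = th0"
| "noisy_alg H ts a b th0 e (Suc 0) = th0"
| "noisy_alg H ts a b th0 e (Suc (Suc n)) =
     (2 * real (Suc n) / real (Suc n + 1)) *\<^sub>R noisy_alg H ts a b th0 e (Suc n)
     - (real n / real (Suc n + 1)) *\<^sub>R noisy_alg H ts a b th0 e n
     - (1 / real (Suc n + 1)) *\<^sub>R
         ((real (Suc n) * (a + b)) *\<^sub>R (H *v (noisy_alg H ts a b th0 e (Suc n) - ts))
          - (real n * b) *\<^sub>R (H *v (noisy_alg H ts a b th0 e n - ts))
          - (real (Suc n) * a + b) *\<^sub>R e (Suc (Suc n)))"

end

theory Submission
  imports Defs
begin



fun Gs :: "real \<Rightarrow> real \<Rightarrow> nat \<Rightarrow> real" where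
  "Gs a b 0 = 0"
| "Gs a b (Suc 0) = 1"
| "Gs a b (Suc (Suc n)) = (2 - a - b) * Gs a b (Suc n) - (1 - b) * Gs a b n"

definition EnK :: "real \<Rightarrow> real \<Rightarrow> nat \<Rightarrow> real" where
  "EnK a b m = a * (Gs a b (Suc m))^2 + (1 - b) * (Gs a b (Suc m) - Gs a b m)^2"

lemma EnK_step:
  assumes "a \<le> 2*b" "b \<le> 1"
  shows "EnK a b (Suc m) \<le> EnK a b m"
proof -
  define x where "x = Gs a b (Suc m)"
  define u where "u = Gs a b (Suc m) - Gs a b m"
  define u' where "u' = (1-b)*u - a*x"
  have g2: "Gs a b (Suc (Suc m)) = x + u'"
    by (simp add: x_def u_def u'_def algebra_simps)
  have gm: "Gs a b m = x - u" by (simp add: x_def u_def)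
  have "EnK a b (Suc m) - EnK a b m = -(1-b)*(u-u')^2 - (2*b-a)*u'^2"
    unfolding EnK_def g2 gm x_def[symmetric] by (simp add: u'_def power2_eq_square algebra_simps)
  moreover have "(1-b)*(u-u')^2 \<ge> 0" "(2*b-a)*u'^2 \<ge> 0" using assms by auto
  ultimately show ?thesis by linarith
qed

lemma Gs_K:
  assumes "0 \<le> a" "a \<le> b" "b \<le> 1"
  shows "a * (Gs a b m)^2 \<le> 1"
proof (cases m)
  case 0 then show ?thesis by simp
next
  case (Suc k)
  have "EnK a b k \<le> EnK a b 0"
    by (induction k) (use assms EnK_step[of a b] order_trans in fastforce)+
  moreover have "EnK a b 0 = 1 + a - b" by (simp add: EnK_def)
  moreover have "a * (Gs a b m)^2 \<le> EnK a b k" using assms unfolding EnK_def Suc by simp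
  ultimately show ?thesis using assms by linarith
qed

definition Psi :: "real \<Rightarrow> real \<Rightarrow> real \<Rightarrow> real \<Rightarrow> real" where
  "Psi a b x y = (2-b)*x^2 - 2*(2-a-b)*(1-b)*x*y + (2-b)*(1-b)^2*y^2"

lemma Psi_nonneg:
  assumes "0 \<le> a" "a \<le> b" "b \<le> 1"
  shows "Psi a b x y \<ge> 0"
proof -
  have "(2-b) * Psi a b x y = ((2-b)*x - (2-a-b)*(1-b)*y)^2 + (1-b)^2*(a*(4-a-2*b))*y^2"
    unfolding Psi_def by (simp add: power2_eq_square algebra_simps)
  moreover have "(1-b)^2*(a*(4-a-2*b))*y^2 \<ge> 0" using assms by simp
  ultimately have "(2-b) * Psi a b x y \<ge> 0" by (metis add_nonneg_nonneg zero_le_power2)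
  moreover have "2 - b > 0" using assms by simp
  ultimately show ?thesis by (simp add: zero_le_mult_iff)
qed

lemma Psi_step:
  "Psi a b x y - Psi a b ((2-a-b)*x - (1-b)*y) x = a*b*(4-a-2*b)*x^2"
  unfolding Psi_def by (simp add: power2_eq_square algebra_simps)

lemma Gs_sum_tele:
  "a*b*(4-a-2*b) * (\<Sum>m\<in>{1..M}. (Gs a b m)^2) + Psi a b (Gs a b (Suc M)) (Gs a b M) = 2 - b"
proof (induction M)
  case 0 then show ?case by (simp add: Psi_def)
next
  case (Suc M)
  have "Psi a b (Gs a b (Suc (Suc M))) (Gs a b (Suc M)) =
        Psi a b (Gs a b (Suc M)) (Gs a b M) - a*b*(4-a-2*b)*(Gs a b (Suc M))^2"
    using Psi_step[of a b "Gs a b (Suc M)" "Gs a b M"] by simp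
  then show ?case using Suc by (simp add: algebra_simps)
qed

lemma Gs_sum:
  assumes "0 < a" "a \<le> b" "b \<le> 1"
  shows "a*b*(\<Sum>m\<in>{1..M}. (Gs a b m)^2) \<le> 1"
proof -
  have "a*b*(4-a-2*b) * (\<Sum>m\<in>{1..M}. (Gs a b m)^2) \<le> 2 - b"
    using Gs_sum_tele[of a b M] Psi_nonneg[of a b] assms by (metis le_add_same_cancel1 order.strict_implies_order)
  moreover have "4-a-2*b \<ge> 2 - b" using assms by simp
  moreover have "a*b*(\<Sum>m\<in>{1..M}. (Gs a b m)^2) \<ge> 0" using assms by (simp add: sum_nonneg)
  ultimately have "a*b*(\<Sum>m\<in>{1..M}. (Gs a b m)^2) * (2-b) \<le> 1 * (2 - b)"
    by (smt (verit, best) mult_left_mono mult.commute mult.assoc)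
  moreover have "2 - b > 0" using assms by simp
  ultimately show ?thesis by simp
qed



lemma sym_dot:
  fixes H :: "real^'n^'n"
  assumes "transpose H = H"
  shows "x \<bullet> (H *v y) = y \<bullet> (H *v x)"
proof -
  have "x \<bullet> (H *v y) = (x v* H) \<bullet> y" by (simp add: dot_lmul_matrix)
  also have "x v* H = H *v x" using vector_transpose_matrix[of x H] assms by simp
  finally show ?thesis by (simp add: inner_commute)
qed

lemma eig_step:
  fixes H :: "real^'n^'n"
  assumes sym: "transpose H = H"
    and fin: "finite B" and lt: "card B < CARD('n)"
    and orth: "pairwise orthogonal B"
    and eig: "\<forall>b\<in>B. norm b = 1 \<and> (\<exists>\<mu>. H *v b = \<mu> *\<^sub>R b)"
  shows "\<exists>x. x \<notin> B \<and> norm x = 1 \<and> (\<forall>b\<in>B. orthogonal b x) \<and> (\<exists>\<mu>. H *v x = \<mu> *\<^sub>R x)"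
proof -
  define W where "W = {y::real^'n. \<forall>b\<in>B. b \<bullet> y = 0}"
  define S where "S = W \<inter> sphere 0 1"
  define f where "f = (\<lambda>y::real^'n. y \<bullet> (H *v y))"
  have "dim B < DIM(real^'n)"
    using dim_le_card[OF order_refl fin] lt by simp
  then obtain x where x: "x \<noteq> 0" "\<And>y. y \<in> span B \<Longrightarrow> orthogonal x y"
    using orthogonal_to_subspace_exists by blast
  have "x /\<^sub>R norm x \<in> S"
    using x span_base[of _ B] unfolding S_def W_def
    by (auto simp: orthogonal_def inner_commute)
  hence Sne: "S \<noteq> {}" by auto
  have "closed W" unfolding W_def
    by (simp add: Collect_ball_eq closed_INT closed_Collect_eq continuous_on_inner continuous_on_const continuous_on_id)
  have "closed W"
  proof -
    have "W = (\<Inter>b\<in>B. {y. b \<bullet> y = 0})" unfolding W_def by auto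
    moreover have "closed {y::real^'n. b \<bullet> y = 0}" for b
      by (intro closed_Collect_eq continuous_intros)
    ultimately show ?thesis by auto
  qed
  hence "compact S" unfolding S_def by (simp add: closed_Int_compact)
  moreover have "continuous_on S f" unfolding f_def
    by (intro continuous_intros linear_continuous_on matrix_vector_mul_linear)
  ultimately obtain x0 where x0: "x0 \<in> S" "\<And>y. y \<in> S \<Longrightarrow> f y \<le> f x0"
    using continuous_attains_sup[of S f] Sne by blast
  define lam where "lam = f x0"
  have nx0: "norm x0 = 1" and x0W: "x0 \<in> W" using x0 unfolding S_def by auto
  have key: "y \<bullet> (H *v x0) = 0" if yW: "y \<in> W" and yo: "y \<bullet> x0 = 0" for y
  proof -
    have ineq: "2 * t * (y \<bullet> (H *v x0)) + t^2 * f y \<le> lam * t^2 * (y \<bullet> y)" for t :: real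
    proof -
      define v where "v = x0 + t *\<^sub>R y"
      have vv: "v \<bullet> v = 1 + t^2 * (y \<bullet> y)"
        using nx0 yo unfolding v_def
        by (simp add: inner_add_left inner_add_right inner_commute power2_eq_square algebra_simps norm_eq_1)
      have vpos: "v \<bullet> v > 0" using vv by (simp add: add_pos_nonneg)
      have "v \<in> W" using x0W yW unfolding W_def v_def by (simp add: inner_add_right)
      moreover have "v \<noteq> 0" using vpos by auto
      ultimately have "v /\<^sub>R norm v \<in> S" unfolding S_def W_def by auto
      hence "f (v /\<^sub>R norm v) \<le> lam" using x0 lam_def by auto
      moreover have "f (v /\<^sub>R norm v) = f v / (v \<bullet> v)"
        unfolding f_def by (simp add: matrix_vector_mult_scaleR power2_norm_eq_inner[symmetric] power2_eq_square divide_inverse)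
      ultimately have "f v \<le> lam * (v \<bullet> v)" using vpos by (simp add: divide_le_eq)
      moreover have "f v = lam + 2 * t * (y \<bullet> (H *v x0)) + t^2 * f y"
        unfolding v_def f_def lam_def
        using sym_dot[OF sym, of x0 y]
        by (simp add: matrix_vector_right_distrib matrix_vector_mult_scaleR inner_add_left inner_add_right power2_eq_square algebra_simps)
      ultimately show ?thesis using vv by (simp add: algebra_simps)
    qed
    define c where "c = y \<bullet> (H *v x0)"
    define D where "D = \<bar>f y\<bar> + \<bar>lam\<bar> * (y \<bullet> y) + 1"
    have Dpos: "D > 0" unfolding D_def by (simp add: add_nonneg_pos)
    show ?thesis
    proof (rule ccontr)
      assume "y \<bullet> (H *v x0) \<noteq> 0"
      hence cpos: "c^2 > 0" unfolding c_def by simp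
      define t where "t = c / D"
      have "2 * t * c + t^2 * f y \<le> lam * t^2 * (y \<bullet> y)" using ineq c_def by simp
      moreover have "t^2 * f y \<ge> - (t^2 * \<bar>f y\<bar>)" using mult_left_mono[of "- \<bar>f y\<bar>" "f y" "t^2"] by simp
      moreover have "lam * t^2 * (y \<bullet> y) \<le> t^2 * (\<bar>lam\<bar> * (y \<bullet> y))"
        by (simp add: mult.commute mult.left_commute mult_right_mono)
      ultimately have "2 * t * c \<le> t^2 * D" unfolding D_def using zero_le_power2[of t] by (simp add: algebra_simps, linarith)
      moreover have "2 * t * c = 2 * c^2 / D" unfolding t_def by (simp add: power2_eq_square)
      moreover have "t^2 * D = c^2 / D" unfolding t_def using Dpos by (simp add: power2_eq_square)
      ultimately have "2 * c^2 / D \<le> c^2 / D" by simp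
      thus False using cpos Dpos by (simp add: divide_le_cancel)
    qed
  qed
  define z where "z = H *v x0 - lam *\<^sub>R x0"
  have zW0: "\<forall>b\<in>B. b \<bullet> z = 0"
  proof
    fix b assume "b \<in> B"
    then obtain mu where "H *v b = mu *\<^sub>R b" using eig by auto
    moreover have "b \<bullet> x0 = 0" using x0W \<open>b\<in>B\<close> unfolding W_def by auto
    ultimately show "b \<bullet> z = 0" unfolding z_def using sym_dot[OF sym, of b x0]
      by (simp add: inner_diff_right inner_commute)
  qed
  hence zW: "z \<in> W" unfolding W_def by simp
  have zo: "z \<bullet> x0 = 0" unfolding z_def lam_def f_def using nx0
    by (simp add: inner_diff_left inner_commute norm_eq_1 inner_diff_right)
  have "z \<bullet> z = 0"
    using key[OF zW zo] zo by (simp add: z_def inner_diff_left inner_diff_right inner_commute)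
  hence "z = 0" by simp
  hence ev: "H *v x0 = lam *\<^sub>R x0" unfolding z_def by simp
  have "x0 \<notin> B"
  proof
    assume "x0 \<in> B" hence "x0 \<bullet> x0 = 0" using x0W unfolding W_def by auto
    thus False using nx0 by simp
  qed
  thus ?thesis using nx0 x0W ev unfolding W_def orthogonal_def by auto
qed

lemma eig_set:
  fixes H :: "real^'n^'n"
  assumes sym: "transpose H = H"
  shows "k \<le> CARD('n) \<Longrightarrow> \<exists>B. finite B \<and> card B = k \<and> pairwise orthogonal B \<and>
            (\<forall>b\<in>B. norm b = 1 \<and> (\<exists>\<mu>. H *v b = \<mu> *\<^sub>R b))"
proof (induction k)
  case 0 show ?case by (rule exI[of _ "{}"]) simp
next
  case (Suc k)
  then obtain B where B: "finite B" "card B = k" "pairwise orthogonal B"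
     "\<forall>b\<in>B. norm b = 1 \<and> (\<exists>\<mu>. H *v b = \<mu> *\<^sub>R b)" by auto
  obtain x where x: "x \<notin> B" "norm x = 1" "\<forall>b\<in>B. orthogonal b x" "\<exists>\<mu>. H *v x = \<mu> *\<^sub>R x"
    using eig_step[OF sym B(1) _ B(3) B(4)] B(2) Suc.prems by auto
  show ?case
    apply (rule exI[of _ "insert x B"])
    using B x by (auto simp: pairwise_insert orthogonal_commute)
qed

lemma spectral:
  fixes H :: "real^'n^'n"
  assumes sym: "transpose H = H"
  obtains B where "finite B" "pairwise orthogonal B" "\<And>b. b \<in> B \<Longrightarrow> norm b = 1"
    "\<And>b. b \<in> B \<Longrightarrow> H *v b = (b \<bullet> (H *v b)) *\<^sub>R b"
    "\<And>x. (\<Sum>b\<in>B. (x \<bullet> b) *\<^sub>R b) = x"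
proof -
  obtain B where B: "finite B" "card B = CARD('n)" "pairwise orthogonal B"
     "\<forall>b\<in>B. norm b = 1 \<and> (\<exists>\<mu>. H *v b = \<mu> *\<^sub>R b)" using eig_set[OF sym order_refl] by auto
  have ev: "H *v b = (b \<bullet> (H *v b)) *\<^sub>R b" if "b \<in> B" for b
  proof -
    have bb: "b \<in> B" by fact
    obtain mu where "H *v b = mu *\<^sub>R b" "norm b = 1" using B(4) bb by blast
    thus ?thesis by (simp add: norm_eq_1)
  qed
  have "0 \<notin> B" using B(4) by auto
  hence "independent B" using pairwise_orthogonal_independent B(3) by blast
  moreover have "card B = dim (UNIV :: (real^'n) set)" using B(2) by simp
  ultimately have "UNIV \<subseteq> span B" using card_eq_dim[of B UNIV] B(1) by auto
  hence "(\<Sum>b\<in>B. (x \<bullet> b) *\<^sub>R b) = x" for x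
    using orthonormal_basis_expand[OF B(3) _ _ B(1)] B(4) by auto
  thus ?thesis using that B ev by auto
qed



lemma conv_step:
  fixes gg :: "nat \<Rightarrow> real"
  shows "(\<Sum>j<Suc (Suc n). Gs a b (Suc (Suc n) - j) * gg j) =
     (2-a-b) * (\<Sum>j<Suc n. Gs a b (Suc n - j) * gg j) - (1-b) * (\<Sum>j<n. Gs a b (n - j) * gg j) + gg (Suc n)"
proof -
  have "(\<Sum>j<Suc (Suc n). Gs a b (Suc (Suc n) - j) * gg j) =
        (\<Sum>j<Suc n. Gs a b (Suc (Suc n) - j) * gg j) + gg (Suc n)" by simp
  also have "(\<Sum>j<Suc n. Gs a b (Suc (Suc n) - j) * gg j) =
     (\<Sum>j<Suc n. (2-a-b) * (Gs a b (Suc n - j) * gg j) - (1-b) * (Gs a b (n - j) * gg j))"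
  proof (rule sum.cong[OF refl])
    fix j assume "j \<in> {..<Suc n}"
    hence "Suc (Suc n) - j = Suc (Suc (n - j))" "Suc n - j = Suc (n - j)" by auto
    thus "Gs a b (Suc (Suc n) - j) * gg j = (2-a-b) * (Gs a b (Suc n - j) * gg j) - (1-b) * (Gs a b (n - j) * gg j)"
      by (simp add: algebra_simps)
  qed
  also have "\<dots> = (2-a-b) * (\<Sum>j<Suc n. Gs a b (Suc n - j) * gg j) - (1-b) * (\<Sum>j<Suc n. Gs a b (n - j) * gg j)"
    by (simp add: sum_subtractf sum_distrib_left distrib_left)
  also have "(\<Sum>j<Suc n. Gs a b (n - j) * gg j) = (\<Sum>j<n. Gs a b (n - j) * gg j)" by simp
  finally show ?thesis .
qed

lemma scalar_sol:
  fixes c e :: "nat \<Rightarrow> real" and al be h c0 :: real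
  defines "gg \<equiv> (\<lambda>j. if j = 0 then 0 else (real j * al + be) * e (Suc j))"
  assumes c0: "c 0 = c0" "c (Suc 0) = c0"
    and rec: "\<And>n. c (Suc (Suc n)) = (2 * real (Suc n) / real (Suc n + 1)) * c (Suc n)
         - (real n / real (Suc n + 1)) * c n
         - (1 / real (Suc n + 1)) * ((real (Suc n) * (al + be)) * (h * c (Suc n))
              - (real n * be) * (h * c n) - (real (Suc n) * al + be) * e (Suc (Suc n)))"
  shows "real N * c N = Gs (al*h) (be*h) N * c0 + (\<Sum>j<N. Gs (al*h) (be*h) (N - j) * gg j)"
proof -
  let ?a = "al*h" and ?b = "be*h"
  let ?P = "\<lambda>N. real N * c N = Gs ?a ?b N * c0 + (\<Sum>j<N. Gs ?a ?b (N - j) * gg j)"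
  have "?P n \<and> ?P (Suc n)" for n
  proof (induction n)
    case 0 show ?case using c0 by (simp add: gg_def)
  next
    case (Suc n)
    hence IH1: "?P n" and IH2: "?P (Suc n)" by auto
    have "real (Suc (Suc n)) * c (Suc (Suc n)) =
        (2 - ?a - ?b) * (real (Suc n) * c (Suc n)) - (1 - ?b) * (real n * c n) + gg (Suc n)"
    proof -
      define m where "m = real (Suc (Suc n))"
      have m0: "m \<noteq> 0" unfolding m_def by simp
      have e: "real (Suc n + 1) = m" unfolding m_def by simp
      have aux: "\<And>A Bv X Y Z. m * (A/m * X - Bv/m*Y - 1/m*Z) = A*X - Bv*Y - Z"
        using m0 by (simp add: field_simps)
      have "m * c (Suc (Suc n)) = 2 * real (Suc n) * c (Suc n) - real n * c n
         - ((real (Suc n) * (al + be)) * (h * c (Suc n))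
              - (real n * be) * (h * c n) - (real (Suc n) * al + be) * e (Suc (Suc n)))"
        unfolding rec e aux by simp
      also have "\<dots> = (2 - ?a - ?b) * (real (Suc n) * c (Suc n)) - (1 - ?b) * (real n * c n) + gg (Suc n)"
        unfolding gg_def by (simp add: algebra_simps)
      finally show ?thesis unfolding m_def .
    qed
    also have "\<dots> = Gs ?a ?b (Suc (Suc n)) * c0 + (\<Sum>j<Suc (Suc n). Gs ?a ?b (Suc (Suc n) - j) * gg j)"
      unfolding IH1 IH2 conv_step by (simp add: algebra_simps)
    finally show ?case using IH2 by simp
  qed
  thus ?thesis by simp
qed



lemma (in prob_space) exp_sq_lin:
  fixes Z :: "nat \<Rightarrow> 'a \<Rightarrow> real" and k :: "nat \<Rightarrow> real"
  assumes fin: "finite J"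
    and iZZ: "\<And>j l. j \<in> J \<Longrightarrow> l \<in> J \<Longrightarrow> integrable M (\<lambda>w. Z j w * Z l w)"
    and iZ: "\<And>j. j \<in> J \<Longrightarrow> integrable M (Z j)"
    and mZ: "\<And>j. j \<in> J \<Longrightarrow> expectation (Z j) = 0"
    and uZ: "\<And>j l. j \<in> J \<Longrightarrow> l \<in> J \<Longrightarrow> j \<noteq> l \<Longrightarrow> expectation (\<lambda>w. Z j w * Z l w) = 0"
    and vZ: "\<And>j. j \<in> J \<Longrightarrow> expectation (\<lambda>w. Z j w * Z j w) = s"
  shows "integrable M (\<lambda>w. (A + (\<Sum>j\<in>J. k j * Z j w))^2) \<and>
         expectation (\<lambda>w. (A + (\<Sum>j\<in>J. k j * Z j w))^2) = A^2 + s * (\<Sum>j\<in>J. (k j)^2)"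
proof -
  have eq: "(A + (\<Sum>j\<in>J. k j * Z j w))^2 =
      A^2 + (\<Sum>j\<in>J. (2 * A * k j) * Z j w) + (\<Sum>j\<in>J. \<Sum>l\<in>J. (k j * k l) * (Z j w * Z l w))" for w
    by (simp add: power2_eq_square algebra_simps sum_distrib_left sum_distrib_right sum.distrib)
  have i1: "integrable M (\<lambda>w. \<Sum>j\<in>J. (2 * A * k j) * Z j w)"
    using iZ by (auto intro!: integrable_sum)
  have i2: "integrable M (\<lambda>w. \<Sum>j\<in>J. \<Sum>l\<in>J. (k j * k l) * (Z j w * Z l w))"
    using iZZ by (auto intro!: integrable_sum)
  have int: "integrable M (\<lambda>w. (A + (\<Sum>j\<in>J. k j * Z j w))^2)"
    unfolding eq by (intro Bochner_Integration.integrable_add i1 i2) simp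
  have e1: "expectation (\<lambda>w. \<Sum>j\<in>J. (2 * A * k j) * Z j w) = 0"
    using iZ mZ by (simp add: integral_sum)
  have e2: "expectation (\<lambda>w. \<Sum>j\<in>J. \<Sum>l\<in>J. (k j * k l) * (Z j w * Z l w)) =
     (\<Sum>j\<in>J. \<Sum>l\<in>J. (k j * k l) * expectation (\<lambda>w. Z j w * Z l w))"
    using iZZ by (simp add: integral_sum integrable_sum)
  also have "\<dots> = (\<Sum>j\<in>J. \<Sum>l\<in>J. (if l = j then (k j)^2 * s else 0))"
    by (intro sum.cong refl) (auto simp: uZ vZ power2_eq_square)
  also have "\<dots> = s * (\<Sum>j\<in>J. (k j)^2)" using fin by (simp add: sum_distrib_left mult.commute)
  finally have e2': "expectation (\<lambda>w. \<Sum>j\<in>J. \<Sum>l\<in>J. (k j * k l) * (Z j w * Z l w)) = s * (\<Sum>j\<in>J. (k j)^2)" .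
  have "expectation (\<lambda>w. (A + (\<Sum>j\<in>J. k j * Z j w))^2) =
     expectation (\<lambda>w. A^2) + expectation (\<lambda>w. \<Sum>j\<in>J. (2 * A * k j) * Z j w) +
     expectation (\<lambda>w. \<Sum>j\<in>J. \<Sum>l\<in>J. (k j * k l) * (Z j w * Z l w))"
    unfolding eq using i1 i2 by (simp add: Bochner_Integration.integral_add)
  thus ?thesis using int e1 e2' prob_space by simp
qed

lemma sq_int_mult:
  fixes X Y :: "'a \<Rightarrow> real"
  assumes "X \<in> borel_measurable M" "Y \<in> borel_measurable M"
    "integrable M (\<lambda>w. (X w)^2)" "integrable M (\<lambda>w. (Y w)^2)"
  shows "integrable M (\<lambda>w. X w * Y w)"
proof -
  have i: "integrable M (\<lambda>w. (X w)^2 + (Y w)^2)" using assms by auto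
  have b: "norm (X w * Y w) \<le> norm ((X w)^2 + (Y w)^2)" for w
  proof -
    have "2 * \<bar>X w\<bar> * \<bar>Y w\<bar> \<le> (X w)^2 + (Y w)^2"
      using sum_squares_bound[of "\<bar>X w\<bar>" "\<bar>Y w\<bar>"] by simp
    moreover have "\<bar>X w * Y w\<bar> = \<bar>X w\<bar> * \<bar>Y w\<bar>" by (simp add: abs_mult)
    moreover have "\<bar>X w\<bar> * \<bar>Y w\<bar> \<ge> 0" by simp
    ultimately have "\<bar>X w * Y w\<bar> \<le> (X w)^2 + (Y w)^2" by linarith
    thus ?thesis by simp
  qed
  show ?thesis
    by (rule Bochner_Integration.integrable_bound[OF i]) (use assms b in auto)
qed

lemma comp_meas:
  fixes f :: "'a \<Rightarrow> real^'n"
  assumes "f \<in> borel_measurable M"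
  shows "(\<lambda>w. f w $ i) \<in> borel_measurable M"
proof -
  have "(\<lambda>v::real^'n. v $ i) \<in> borel_measurable borel"
    by (intro borel_measurable_continuous_onI continuous_intros)
  thus ?thesis using measurable_compose[OF assms] by blast
qed



lemma comb2: "(X::real) \<le> M \<Longrightarrow> Y \<le> M \<Longrightarrow> c \<ge> 0 \<Longrightarrow> d \<ge> 0 \<Longrightarrow> c*X + d*Y \<le> c*M + d*M"
  by (simp add: add_mono mult_left_mono)

lemma final_ineq:
  fixes r T L al be :: real and N :: nat
  assumes r: "r > 0" and T: "T > 0" and L: "L > 0" and N: "N \<ge> 1"
    and al: "al = min (r / (sqrt (L*T) * real N)) (1/L)"
    and be: "be = min (real N * al) (1/L)"
  shows "(r^2/al + (real N*al+be)^2/(al*be)*T) / (2*(real N)^2)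
     \<le> max (5*T/real N) (max (5* sqrt(T*L)*r/real N) (2*L*r^2/(real N)^2))"
proof -
  define n where "n = real N"
  define s where "s = sqrt (L*T)"
  have n1: "n \<ge> 1" using N unfolding n_def by simp
  have s: "s > 0" "s^2 = L*T" unfolding s_def using L T by auto
  have sTL: "sqrt (T*L) = s" unfolding s_def by (simp add: mult.commute)
  define Mx where "Mx = max (5*T/n) (max (5* s*r/n) (2*L*r^2/n^2))"
  have M1: "5*T/n \<le> Mx" and M2: "5* s*r/n \<le> Mx" and M3: "2*L*r^2/n^2 \<le> Mx" unfolding Mx_def by auto
  have "5*T/n \<ge> 0" using T n1 by simp
  hence Mpos: "Mx \<ge> 0" using M1 by linarith
  have goal: "(r^2/al + (n*al+be)^2/(al*be)*T) / (2*n^2) \<le> Mx"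
  proof (cases "r / (s * n) \<ge> 1/L")
    case True
    hence al1: "al = 1/L" using al unfolding s_def n_def by simp
    have be1: "be = 1/L" using be al1 n1 L unfolding n_def by (simp add: min_def divide_le_cancel)
    have "r * L \<ge> s * n" using True s n1 L by (simp add: field_simps)
    hence "(r*L)^2 \<ge> (s*n)^2" using s n1 by (intro power_mono) auto
    hence TN: "T * n^2 \<le> L * r^2" using s L by (simp add: power_mult_distrib power2_eq_square field_simps)
    have "(n*al+be)^2/(al*be) = (n+1)^2" unfolding al1 be1 using L by (simp add: field_simps power2_eq_square)
    also have "\<dots> \<le> n^2 + 3*n" using n1 by (simp add: power2_eq_square algebra_simps)
    finally have A: "(n*al+be)^2/(al*be)*T \<le> (n^2 + 3*n)*T" using T by (intro mult_right_mono) auto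
    have "r^2/al = L*r^2" using al1 by simp
    hence "r^2/al + (n*al+be)^2/(al*be)*T \<le> 2*L*r^2 + 3*n*T" using A TN by (simp add: algebra_simps)
    hence "(r^2/al + (n*al+be)^2/(al*be)*T) / (2*n^2) \<le> (2*L*r^2 + 3*n*T)/(2*n^2)"
      using n1 by (simp add: divide_right_mono)
    also have "\<dots> = (1/2) * (2*L*r^2/n^2) + (3/10) * (5*T/n)" using n1 by (simp add: field_simps power2_eq_square)
    also have "\<dots> \<le> (1/2)*Mx + (3/10)*Mx" by (rule comb2[OF M3 M1]) auto
    finally show ?thesis using Mpos by linarith
  next
    case False
    hence al1: "al = r / (s*n)" using al unfolding s_def n_def by simp
    have alpos: "al > 0" using al1 r s n1 by simp
    have ral: "r^2/al = r* s*n" unfolding al1 using r s n1 by (simp add: field_simps power2_eq_square)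
    show ?thesis
    proof (cases "n * al \<le> 1/L")
      case True
      hence be1: "be = n*al" using be unfolding n_def by simp
      have "(n*al+be)^2/(al*be) = 4*n" unfolding be1 using alpos n1 by (simp add: field_simps power2_eq_square)
      hence "(r^2/al + (n*al+be)^2/(al*be)*T) / (2*n^2) = (1/10)*(5* s*r/n) + (2/5)*(5*T/n)"
        using ral n1 by (simp add: field_simps power2_eq_square)
      also have "\<dots> \<le> (1/10)*Mx + (2/5)*Mx" by (rule comb2[OF M2 M1]) auto
      finally show ?thesis using Mpos by linarith
    next
      case False
      hence be1: "be = 1/L" using be unfolding n_def by simp
      have nalL: "n*al*L > 1" using False L by (simp add: field_simps)
      have inv: "1/(al*L) < n" using nalL alpos L by (simp add: field_simps)
      have "(n*al+be)^2/(al*be) = n^2*al*L + 2*n + 1/(al*L)"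
        unfolding be1 using alpos L by (simp add: field_simps power2_eq_square)
      also have "\<dots> \<le> n^2*al*L + 3*n" using inv by simp
      finally have A: "(n*al+be)^2/(al*be)*T \<le> (n^2*al*L + 3*n)*T" using T by (intro mult_right_mono) auto
      have "n^2*al*L*T = r* s*n" unfolding al1 s(2)[symmetric] using s n1 r by (simp add: field_simps power2_eq_square)
      hence "r^2/al + (n*al+be)^2/(al*be)*T \<le> 2*r* s*n + 3*n*T" using A ral by (simp add: algebra_simps)
      hence "(r^2/al + (n*al+be)^2/(al*be)*T) / (2*n^2) \<le> (2*r* s*n + 3*n*T)/(2*n^2)"
        using n1 by (simp add: divide_right_mono)
      also have "\<dots> = (1/5) * (5* s*r/n) + (3/10) * (5*T/n)" using n1 by (simp add: field_simps power2_eq_square)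
      also have "\<dots> \<le> (1/5)*Mx + (3/10)*Mx" by (rule comb2[OF M2 M1]) auto
      finally show ?thesis using Mpos by linarith
    qed
  qed
  thus ?thesis unfolding Mx_def n_def sTL .
qed





lemma mv_sum:
  fixes H :: "real^'n^'n"
  shows "H *v (\<Sum>b\<in>B. f b *\<^sub>R g b) = (\<Sum>b\<in>B. f b *\<^sub>R (H *v g b))"
  by (induction B rule: infinite_finite_induct)
     (auto simp: matrix_vector_right_distrib matrix_vector_mult_scaleR)

lemma inner_eig:
  fixes H :: "real^'n^'n"
  assumes sym: "transpose H = H" and ev: "H *v b = lam *\<^sub>R b"
  shows "b \<bullet> (H *v v) = lam * (b \<bullet> v)"
  using sym_dot[OF sym, of b v] ev by (simp add: inner_commute)

lemma shift_aux:
  fixes A Bv m P Q Z K :: real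
  assumes "A - Bv = m" "m \<noteq> 0"
  shows "A/m*P - Bv/m*Q - 1/m*Z - K = A/m*(P - K) - Bv/m*(Q - K) - 1/m*Z"
proof -
  have "A/m*(P - K) - Bv/m*(Q - K) - 1/m*Z = (A/m*P - Bv/m*Q - 1/m*Z) - ((A - Bv)/m)*K"
    by (simp add: algebra_simps diff_divide_distrib)
  thus ?thesis using assms by simp
qed

lemma proj_rec:
  fixes H :: "real^'n^'n" and th :: "nat \<Rightarrow> real^'n"
  assumes sym: "transpose H = H" and ev: "H *v b = lam *\<^sub>R b"
    and thd: "th = noisy_alg H ts a be th0 e"
  shows "b \<bullet> (th (Suc (Suc n)) - ts) =
     (2 * real (Suc n) / real (Suc n + 1)) * (b \<bullet> (th (Suc n) - ts))
     - (real n / real (Suc n + 1)) * (b \<bullet> (th n - ts))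
     - (1 / real (Suc n + 1)) * ((real (Suc n) * (a + be)) * (lam * (b \<bullet> (th (Suc n) - ts)))
        - (real n * be) * (lam * (b \<bullet> (th n - ts))) - (real (Suc n) * a + be) * (b \<bullet> e (Suc (Suc n))))"
proof -
  have ie: "\<And>v. b \<bullet> (H *v v) = lam * (b \<bullet> v)" using inner_eig[OF sym ev] .
  define P where "P = b \<bullet> th (Suc n)"
  define Q where "Q = b \<bullet> th n"
  define K where "K = b \<bullet> ts"
  define E where "E = b \<bullet> e (Suc (Suc n))"
  have "b \<bullet> th (Suc (Suc n)) = (2 * real (Suc n) / real (Suc n + 1)) * P
     - (real n / real (Suc n + 1)) * Q
     - (1 / real (Suc n + 1)) * ((real (Suc n) * (a + be)) * (lam * (P - K))
        - (real n * be) * (lam * (Q - K)) - (real (Suc n) * a + be) * E)"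
    unfolding thd noisy_alg.simps(3) P_def Q_def K_def E_def
    by (simp add: inner_diff_right inner_add_right ie thd)
  moreover have "2 * real (Suc n) - real n = real (Suc n + 1)" by simp
  ultimately show ?thesis
    unfolding P_def[symmetric] Q_def[symmetric] K_def[symmetric] E_def[symmetric] inner_diff_right
    using shift_aux[of "2 * real (Suc n)" "real n" "real (Suc n + 1)" P Q] by simp
qed

lemma inner_expand:
  fixes B :: "(real^'n) set"
  assumes exp: "\<And>x. (\<Sum>b\<in>B. (x \<bullet> b) *\<^sub>R b) = x"
  shows "v \<bullet> w = (\<Sum>b\<in>B. (v \<bullet> b) * (w \<bullet> b))"
proof -
  have "v \<bullet> w = v \<bullet> (\<Sum>b\<in>B. (w \<bullet> b) *\<^sub>R b)" using exp[of w] by simp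
  also have "\<dots> = (\<Sum>b\<in>B. (v \<bullet> b) * (w \<bullet> b))" by (simp add: inner_sum_right mult.commute)
  finally show ?thesis .
qed

lemma Hinv_expand:
  fixes H Hi :: "real^'n^'n"
  assumes inv: "Hi ** H = mat 1"
    and exp: "\<And>x. (\<Sum>b\<in>B. (x \<bullet> b) *\<^sub>R b) = x"
    and ev: "\<And>b. b \<in> B \<Longrightarrow> H *v b = lam b *\<^sub>R b"
    and lpos: "\<And>b. b \<in> B \<Longrightarrow> lam b \<noteq> 0"
  shows "Hi *v v = (\<Sum>b\<in>B. ((v \<bullet> b) / lam b) *\<^sub>R b)"
proof -
  define w where "w = (\<Sum>b\<in>B. ((v \<bullet> b) / lam b) *\<^sub>R b)"
  have "H *v w = (\<Sum>b\<in>B. ((v \<bullet> b) / lam b) *\<^sub>R (H *v b))" unfolding w_def by (rule mv_sum)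
  also have "\<dots> = (\<Sum>b\<in>B. (v \<bullet> b) *\<^sub>R b)"
    by (intro sum.cong refl) (simp add: ev lpos)
  also have "\<dots> = v" by (rule exp)
  finally have "H *v w = v" .
  hence "Hi *v v = Hi *v (H *v w)" by simp
  also have "\<dots> = (Hi ** H) *v w" by (simp add: matrix_vector_mul_assoc)
  finally show ?thesis using inv w_def by simp
qed

lemma quad_dec:
  fixes H :: "real^'n^'n"
  assumes sym: "transpose H = H" and Hts: "H *v ts = q"
    and exp: "\<And>x. (\<Sum>b\<in>B. (x \<bullet> b) *\<^sub>R b) = x"
    and ev: "\<And>b. b \<in> B \<Longrightarrow> H *v b = lam b *\<^sub>R b"
  shows "quad_obj H q th - quad_obj H q ts = (1/2) * (\<Sum>b\<in>B. lam b * (b \<bullet> (th - ts))^2)"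
proof -
  define v where "v = th - ts"
  have s1: "th \<bullet> (H *v ts) = ts \<bullet> (H *v th)" by (rule sym_dot[OF sym])
  have "quad_obj H q th - quad_obj H q ts = (1/2) * (v \<bullet> (H *v v))"
    unfolding quad_obj_def v_def Hts[symmetric] using s1
    by (simp add: matrix_vector_right_distrib inner_diff_left inner_diff_right inner_commute algebra_simps)
  also have "H *v v = (\<Sum>b\<in>B. (v \<bullet> b) *\<^sub>R (lam b *\<^sub>R b))"
    using mv_sum[of H "\<lambda>b. v \<bullet> b" "\<lambda>b. b" B] exp[of v] by (simp add: ev)
  also have "v \<bullet> \<dots> = (\<Sum>b\<in>B. lam b * (b \<bullet> v)^2)"
    by (simp add: inner_sum_right power2_eq_square inner_commute algebra_simps)
  finally show ?thesis unfolding v_def .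
qed

lemma trace_formula:
  fixes H Hi C :: "real^'n^'n"
  assumes inv: "Hi ** H = mat 1"
    and exp: "\<And>x. (\<Sum>b\<in>B. (x \<bullet> b) *\<^sub>R b) = x"
    and ev: "\<And>b. b \<in> B \<Longrightarrow> H *v b = lam b *\<^sub>R b"
    and lpos: "\<And>b. b \<in> B \<Longrightarrow> lam b \<noteq> 0"
    and fin: "finite B"
  shows "trace (C ** Hi) = (\<Sum>b\<in>B. (b \<bullet> (C *v b)) / lam b)"
proof -
  have Hik: "Hi $ k $ i = (\<Sum>b\<in>B. (b $ i / lam b) * b $ k)" for k i
  proof -
    have "Hi $ k $ i = (Hi *v axis i 1) $ k"
      by (simp add: matrix_vector_mult_def axis_def if_distrib cong: if_cong)
    also have "\<dots> = (\<Sum>b\<in>B. ((axis i 1 \<bullet> b) / lam b) *\<^sub>R b) $ k"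
      using Hinv_expand[OF inv exp ev lpos] by simp
    also have "\<dots> = (\<Sum>b\<in>B. (b $ i / lam b) * b $ k)"
      by (simp add: inner_axis' inner_axis inner_commute)
    finally show ?thesis .
  qed
  have "trace (C ** Hi) = (\<Sum>i\<in>UNIV. \<Sum>k\<in>UNIV. C $ i $ k * Hi $ k $ i)"
    by (simp add: trace_def matrix_matrix_mult_def)
  also have "\<dots> = (\<Sum>i\<in>UNIV. \<Sum>k\<in>UNIV. \<Sum>b\<in>B. (b $ i * C $ i $ k * b $ k) / lam b)"
    unfolding Hik by (simp add: sum_distrib_left mult.commute mult.left_commute)
  also have "\<dots> = (\<Sum>b\<in>B. (\<Sum>i\<in>UNIV. \<Sum>k\<in>UNIV. b $ i * C $ i $ k * b $ k) / lam b)"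
    by (simp add: sum_divide_distrib sum.swap[of _ B])
  also have "\<dots> = (\<Sum>b\<in>B. (b \<bullet> (C *v b)) / lam b)"
    by (simp add: inner_vec_def matrix_vector_mult_def sum_distrib_left mult.assoc)
  finally show ?thesis .
qed

lemma (in prob_space) noise_facts:
  fixes eps :: "nat \<Rightarrow> 'a \<Rightarrow> real^'d" and C :: "real^'d^'d"
  assumes eps_meas: "\<And>n. n \<ge> 2 \<Longrightarrow> eps n \<in> borel_measurable M"
    and eps_L2: "\<And>n i. n \<ge> 2 \<Longrightarrow> integrable M (\<lambda>w. (eps n w $ i)^2)"
    and eps_mean: "\<And>n i. n \<ge> 2 \<Longrightarrow> expectation (\<lambda>w. eps n w $ i) = 0"
    and eps_uncorr: "\<And>n m i j. n \<ge> 2 \<Longrightarrow> m \<ge> 2 \<Longrightarrow> n \<noteq> m \<Longrightarrow>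
                      expectation (\<lambda>w. eps n w $ i * eps m w $ j) = 0"
    and eps_cov: "\<And>n i j. n \<ge> 2 \<Longrightarrow>
                      expectation (\<lambda>w. eps n w $ i * eps n w $ j) = C $ i $ j"
    and j: "j \<ge> 2" and l: "l \<ge> 2"
  shows "integrable M (\<lambda>w. u \<bullet> eps j w)"
    and "expectation (\<lambda>w. u \<bullet> eps j w) = 0"
    and "integrable M (\<lambda>w. (u \<bullet> eps j w) * (v \<bullet> eps l w))"
    and "expectation (\<lambda>w. (u \<bullet> eps j w) * (v \<bullet> eps l w)) = (if j = l then u \<bullet> (C *v v) else 0)"
proof -
  have mc: "(\<lambda>w. eps n w $ i) \<in> borel_measurable M" if "n \<ge> 2" for n i
    using comp_meas[OF eps_meas[OF that]] .
  have ic: "integrable M (\<lambda>w. eps n w $ i)" if "n \<ge> 2" for n i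
    by (rule square_integrable_imp_integrable[OF mc[OF that] eps_L2[OF that]])
  have ip: "integrable M (\<lambda>w. eps n w $ i * eps m w $ k)" if "n \<ge> 2" "m \<ge> 2" for n m i k
    by (rule sq_int_mult[OF mc[OF that(1)] mc[OF that(2)] eps_L2[OF that(1)] eps_L2[OF that(2)]])
  have dot: "u \<bullet> eps n w = (\<Sum>i\<in>UNIV. u $ i * eps n w $ i)" for n w u
    by (simp add: inner_vec_def)
  show "integrable M (\<lambda>w. u \<bullet> eps j w)"
    unfolding dot using ic[OF j] by (auto intro!: Bochner_Integration.integrable_sum)
  show "expectation (\<lambda>w. u \<bullet> eps j w) = 0"
    unfolding dot using ic[OF j] eps_mean[OF j] by (simp add: Bochner_Integration.integral_sum)
  have pr: "(u \<bullet> eps j w) * (v \<bullet> eps l w) = (\<Sum>i\<in>UNIV. \<Sum>k\<in>UNIV. (u $ i * v $ k) * (eps j w $ i * eps l w $ k))" for w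
    unfolding dot by (simp add: sum_product algebra_simps)
  show "integrable M (\<lambda>w. (u \<bullet> eps j w) * (v \<bullet> eps l w))"
    unfolding pr using ip[OF j l] by (auto intro!: Bochner_Integration.integrable_sum)
  have "expectation (\<lambda>w. (u \<bullet> eps j w) * (v \<bullet> eps l w)) =
     (\<Sum>i\<in>UNIV. \<Sum>k\<in>UNIV. (u $ i * v $ k) * expectation (\<lambda>w. eps j w $ i * eps l w $ k))"
    unfolding pr using ip[OF j l]
    by (simp add: Bochner_Integration.integral_sum Bochner_Integration.integrable_sum)
  also have "\<dots> = (if j = l then u \<bullet> (C *v v) else 0)"
  proof (cases "j = l")
    case True
    then show ?thesis using eps_cov[OF j]
      by (simp add: inner_vec_def matrix_vector_mult_def sum_distrib_left algebra_simps)
  next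
    case False
    then show ?thesis using eps_uncorr[OF j l] by simp
  qed
  finally show "expectation (\<lambda>w. (u \<bullet> eps j w) * (v \<bullet> eps l w)) = (if j = l then u \<bullet> (C *v v) else 0)" .
qed

lemma reindex_le:
  fixes f :: "nat \<Rightarrow> real"
  assumes "\<And>m. f m \<ge> 0"
  shows "(\<Sum>j\<in>{1..<N}. f (N - j)) \<le> (\<Sum>m\<in>{1..N}. f m)"
proof -
  have inj: "inj_on (\<lambda>j. N - j) {1..<N}" by (auto simp: inj_on_def)
  have "(\<Sum>j\<in>{1..<N}. f (N - j)) = (\<Sum>m\<in>(\<lambda>j. N - j) ` {1..<N}. f m)"
    using sum.reindex[OF inj, of f] by (simp add: o_def)
  also have "\<dots> \<le> (\<Sum>m\<in>{1..N}. f m)"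
    by (rule sum_mono2) (auto simp: assms)
  finally show ?thesis .
qed

lemma comp_bound:
  fixes al be lam sig c0 :: real and N :: nat
  assumes al: "0 < al" "al \<le> be" and lam: "0 < lam" "be * lam \<le> 1" and sig: "sig \<ge> 0"
  shows "lam * ((Gs (al*lam) (be*lam) N * c0)^2 +
            sig * (\<Sum>j\<in>{1..<N}. (Gs (al*lam) (be*lam) (N-j) * (real j*al+be))^2))
         \<le> c0^2/al + sig*(real N*al+be)^2/(al*be*lam)"
proof -
  let ?G = "Gs (al*lam) (be*lam)"
  have bepos: "be > 0" using al by simp
  have ab: "al*lam \<le> be*lam" using al lam by (simp add: mult_right_mono)
  have K: "(al*lam) * (?G N)^2 \<le> 1" by (rule Gs_K) (use al lam ab in auto)
  have T1: "lam * (?G N * c0)^2 \<le> c0^2/al"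
  proof -
    have "lam * (?G N * c0)^2 = ((al*lam) * (?G N)^2) * c0^2 / al" using al by (simp add: power_mult_distrib field_simps)
    also have "\<dots> \<le> 1 * c0^2 / al" using K al by (intro divide_right_mono mult_right_mono) auto
    finally show ?thesis by simp
  qed
  have w: "(real j*al+be)^2 \<le> (real N*al+be)^2" if "j \<in> {1..<N}" for j
  proof -
    have "real j*al \<le> real N*al" using that al by (intro mult_right_mono) auto
    thus ?thesis using al bepos by (intro power_mono) auto
  qed
  have "(\<Sum>j\<in>{1..<N}. (?G (N-j) * (real j*al+be))^2) \<le> (\<Sum>j\<in>{1..<N}. (real N*al+be)^2 * (?G (N-j))^2)"
    by (intro sum_mono) (use w in \<open>auto simp: power_mult_distrib mult.commute intro: mult_right_mono\<close>)
  also have "\<dots> = (real N*al+be)^2 * (\<Sum>j\<in>{1..<N}. (?G (N-j))^2)" by (simp add: sum_distrib_left)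
  also have "\<dots> \<le> (real N*al+be)^2 * (\<Sum>m\<in>{1..N}. (?G m)^2)"
    by (intro mult_left_mono reindex_le) auto
  finally have S1: "(\<Sum>j\<in>{1..<N}. (?G (N-j) * (real j*al+be))^2) \<le> (real N*al+be)^2 * (\<Sum>m\<in>{1..N}. (?G m)^2)" .
  have S2: "(al*lam)*(be*lam)*(\<Sum>m\<in>{1..N}. (?G m)^2) \<le> 1"
    by (rule Gs_sum) (use al lam ab in auto)
  have S3: "(\<Sum>m\<in>{1..N}. (?G m)^2) \<le> 1/(al*be*lam^2)"
  proof -
    have pos: "(al*lam)*(be*lam) > 0" using al lam bepos by simp
    have "(\<Sum>m\<in>{1..N}. (?G m)^2) \<le> 1/((al*lam)*(be*lam))"
      using S2 pos by (simp add: field_simps mult.commute)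
    thus ?thesis by (simp add: power2_eq_square mult.commute mult.left_commute)
  qed
  have "lam * (sig * (\<Sum>j\<in>{1..<N}. (?G (N-j) * (real j*al+be))^2)) \<le> lam * (sig * ((real N*al+be)^2 * (1/(al*be*lam^2))))"
    using S1 S3 sig lam by (intro mult_left_mono order_trans[OF S1]) auto
  also have "\<dots> = sig*(real N*al+be)^2/(al*be*lam)" using lam al bepos by (simp add: power2_eq_square field_simps)
  finally have T2: "lam * (sig * (\<Sum>j\<in>{1..<N}. (?G (N-j) * (real j*al+be))^2)) \<le> sig*(real N*al+be)^2/(al*be*lam)" .
  show ?thesis using T1 T2 by (simp add: distrib_left)
qed

lemma (in prob_space) eig_comp:
  fixes eps :: "nat \<Rightarrow> 'a \<Rightarrow> real^'d" and C H :: "real^'d^'d"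
  assumes eps_meas: "\<And>n. n \<ge> 2 \<Longrightarrow> eps n \<in> borel_measurable M"
    and eps_L2: "\<And>n i. n \<ge> 2 \<Longrightarrow> integrable M (\<lambda>w. (eps n w $ i)^2)"
    and eps_mean: "\<And>n i. n \<ge> 2 \<Longrightarrow> expectation (\<lambda>w. eps n w $ i) = 0"
    and eps_uncorr: "\<And>n m i j. n \<ge> 2 \<Longrightarrow> m \<ge> 2 \<Longrightarrow> n \<noteq> m \<Longrightarrow>
                      expectation (\<lambda>w. eps n w $ i * eps m w $ j) = 0"
    and eps_cov: "\<And>n i j. n \<ge> 2 \<Longrightarrow>
                      expectation (\<lambda>w. eps n w $ i * eps n w $ j) = C $ i $ j"
    and sym: "transpose H = H" and ev: "H *v b = lam *\<^sub>R b" and N: "N \<ge> 1"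
  shows "integrable M (\<lambda>w. (real N * (b \<bullet> (noisy_alg H ts al be th0 (\<lambda>n. eps n w) N - ts)))^2)
    \<and> expectation (\<lambda>w. (real N * (b \<bullet> (noisy_alg H ts al be th0 (\<lambda>n. eps n w) N - ts)))^2)
       = (Gs (al*lam) (be*lam) N * (b \<bullet> (th0 - ts)))^2
         + (b \<bullet> (C *v b)) * (\<Sum>j\<in>{1..<N}. (Gs (al*lam) (be*lam) (N-j) * (real j*al+be))^2)"
proof -
  let ?G = "Gs (al*lam) (be*lam)"
  let ?A = "?G N * (b \<bullet> (th0 - ts))"
  let ?k = "\<lambda>j. ?G (N-j) * (real j*al+be)"
  let ?Z = "\<lambda>j w. b \<bullet> eps (Suc j) w"
  have pw: "real N * (b \<bullet> (noisy_alg H ts al be th0 (\<lambda>n. eps n w) N - ts)) = ?A + (\<Sum>j\<in>{1..<N}. ?k j * ?Z j w)" for w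
  proof -
    define c where "c = (\<lambda>n. b \<bullet> (noisy_alg H ts al be th0 (\<lambda>n. eps n w) n - ts))"
    define e where "e = (\<lambda>k. b \<bullet> eps k w)"
    have "real N * c N = ?G N * (b \<bullet> (th0 - ts)) +
        (\<Sum>j<N. ?G (N - j) * (if j = 0 then 0 else (real j * al + be) * e (Suc j)))"
    proof (rule scalar_sol)
      show "c 0 = b \<bullet> (th0 - ts)" "c (Suc 0) = b \<bullet> (th0 - ts)" unfolding c_def by simp_all
      show "c (Suc (Suc n)) = (2 * real (Suc n) / real (Suc n + 1)) * c (Suc n)
         - (real n / real (Suc n + 1)) * c n
         - (1 / real (Suc n + 1)) * ((real (Suc n) * (al + be)) * (lam * c (Suc n))
              - (real n * be) * (lam * c n) - (real (Suc n) * al + be) * e (Suc (Suc n)))" for n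
        unfolding c_def e_def by (rule proj_rec[OF sym ev refl])
    qed
    also have "(\<Sum>j<N. ?G (N - j) * (if j = 0 then 0 else (real j * al + be) * e (Suc j)))
        = (\<Sum>j\<in>{1..<N}. ?k j * ?Z j w)"
    proof -
      have "(\<Sum>j<N. ?G (N - j) * (if j = 0 then 0 else (real j * al + be) * e (Suc j)))
          = (\<Sum>j\<in>{0..<N}. ?G (N - j) * (if j = 0 then 0 else (real j * al + be) * e (Suc j)))"
        by (simp add: lessThan_atLeast0)
      also have "\<dots> = (\<Sum>j\<in>{Suc 0..<N}. ?G (N - j) * (if j = 0 then 0 else (real j * al + be) * e (Suc j)))"
        using N by (subst sum.atLeast_Suc_lessThan) auto
      also have "\<dots> = (\<Sum>j\<in>{1..<N}. ?k j * ?Z j w)"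
        by (intro sum.cong) (auto simp: e_def)
      finally show ?thesis .
    qed
    finally show ?thesis unfolding c_def by simp
  qed
  have J2: "\<And>j. j \<in> {1..<N} \<Longrightarrow> Suc j \<ge> 2" by auto
  note ass = eps_meas eps_L2 eps_mean eps_uncorr eps_cov
  have nf: "integrable M (\<lambda>w. u \<bullet> eps j w)"
    "expectation (\<lambda>w. u \<bullet> eps j w) = 0"
    "integrable M (\<lambda>w. (u \<bullet> eps j w) * (v \<bullet> eps l w))"
    "expectation (\<lambda>w. (u \<bullet> eps j w) * (v \<bullet> eps l w)) = (if j = l then u \<bullet> (C *v v) else 0)"
    if "j \<ge> 2" "l \<ge> 2" for j l u v
  proof -
    show "integrable M (\<lambda>w. u \<bullet> eps j w)" by (rule noise_facts(1)) (use ass that in auto)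
    show "expectation (\<lambda>w. u \<bullet> eps j w) = 0" by (rule noise_facts(2)) (use ass that in auto)
    show "integrable M (\<lambda>w. (u \<bullet> eps j w) * (v \<bullet> eps l w))" by (rule noise_facts(3)) (use ass that in auto)
    show "expectation (\<lambda>w. (u \<bullet> eps j w) * (v \<bullet> eps l w)) = (if j = l then u \<bullet> (C *v v) else 0)"
      by (rule noise_facts(4)) (use ass that in auto)
  qed
  have res: "integrable M (\<lambda>w. (?A + (\<Sum>j\<in>{1..<N}. ?k j * ?Z j w))^2) \<and>
         expectation (\<lambda>w. (?A + (\<Sum>j\<in>{1..<N}. ?k j * ?Z j w))^2) = ?A^2 + (b \<bullet> (C *v b)) * (\<Sum>j\<in>{1..<N}. (?k j)^2)"
  proof (rule exp_sq_lin)
    show "finite {1..<N}" by simp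
    show "integrable M (\<lambda>w. ?Z j w * ?Z l w)" if "j \<in> {1..<N}" "l \<in> {1..<N}" for j l
      using nf(3)[OF J2[OF that(1)] J2[OF that(2)]] by simp
    show "integrable M (?Z j)" if "j \<in> {1..<N}" for j
      using nf(1)[OF J2[OF that] J2[OF that]] by simp
    show "expectation (?Z j) = 0" if "j \<in> {1..<N}" for j
      using nf(2)[OF J2[OF that] J2[OF that]] by simp
    show "expectation (\<lambda>w. ?Z j w * ?Z l w) = 0" if "j \<in> {1..<N}" "l \<in> {1..<N}" "j \<noteq> l" for j l
      using nf(4)[OF J2[OF that(1)] J2[OF that(2)], of b b] that(3) by simp
    show "expectation (\<lambda>w. ?Z j w * ?Z j w) = b \<bullet> (C *v b)" if "j \<in> {1..<N}" for j
      using nf(4)[OF J2[OF that] J2[OF that], of b b] by simp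
  qed
  show ?thesis unfolding pw using res by simp
qed

theorem corollary3:
  fixes M :: "'w measure"
    and H C :: "real^'d^'d" and q th0 :: "real^'d" and L :: real
    and eps :: "nat \<Rightarrow> 'w \<Rightarrow> real^'d"
    and N :: nat and \<alpha> \<beta> :: real
  assumes P: "prob_space M"
    and H_sym: "transpose H = H"
    and H_pd: "\<And>x. x \<noteq> 0 \<Longrightarrow> x \<bullet> (H *v x) > 0"
    and L_max: "is_largest_eigenvalue H L"
    and C_sym: "transpose C = C"
    and C_psd: "\<And>x. x \<bullet> (C *v x) \<ge> 0"
    and eps_meas: "\<And>n. n \<ge> 2 \<Longrightarrow> eps n \<in> borel_measurable M"
    and eps_L2: "\<And>n i. n \<ge> 2 \<Longrightarrow> integrable M (\<lambda>w. (eps n w $ i)^2)"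
    and eps_mean: "\<And>n i. n \<ge> 2 \<Longrightarrow> prob_space.expectation M (\<lambda>w. eps n w $ i) = 0"
    and eps_uncorr: "\<And>n m i j. n \<ge> 2 \<Longrightarrow> m \<ge> 2 \<Longrightarrow> n \<noteq> m \<Longrightarrow>
                      prob_space.expectation M (\<lambda>w. eps n w $ i * eps m w $ j) = 0"
    and eps_cov: "\<And>n i j. n \<ge> 2 \<Longrightarrow>
                      prob_space.expectation M (\<lambda>w. eps n w $ i * eps n w $ j) = C $ i $ j"
    and tr_pos: "trace (C ** matrix_inv H) > 0"
    and th0_ne: "th0 \<noteq> matrix_inv H *v q"
    and N_pos: "N \<ge> 1"
    and alpha_def: "\<alpha> = min (norm (th0 - matrix_inv H *v q)
                          / (sqrt (L * trace (C ** matrix_inv H)) * real N)) (1 / L)"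
    and beta_def: "\<beta> = min (real N * \<alpha>) (1 / L)"
  shows "prob_space.expectation M
           (\<lambda>w. quad_obj H q (noisy_alg H (matrix_inv H *v q) \<alpha> \<beta> th0 (\<lambda>n. eps n w) N))
         - quad_obj H q (matrix_inv H *v q)
       \<le> max (5 * trace (C ** matrix_inv H) / real N)
            (max (5 * sqrt (trace (C ** matrix_inv H) * L) * norm (th0 - matrix_inv H *v q) / real N)
                 (2 * L * (norm (th0 - matrix_inv H *v q))^2 / (real N)^2))"
proof -
  interpret prob_space M by (rule P)
  define ts where "ts = matrix_inv H *v q"
  define T where "T = trace (C ** matrix_inv H)"
  define r where "r = norm (th0 - ts)"
  have r: "r > 0" using th0_ne unfolding ts_def r_def by simp
  have T: "T > 0" using tr_pos unfolding T_def .
  have "\<forall>x. H *v x = 0 \<longrightarrow> x = 0"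
  proof (intro allI impI)
    fix x assume "H *v x = 0"
    hence "x \<bullet> (H *v x) = 0" by simp
    thus "x = 0" using H_pd[of x] by (cases "x = 0") auto
  qed
  then obtain Bm :: "real^'d^'d" where "Bm ** H = mat 1" using matrix_left_invertible_ker by blast
  hence inv: "invertible H" using invertible_left_inverse by blast
  have HH: "H ** matrix_inv H = mat 1 \<and> matrix_inv H ** H = mat 1"
    using inv unfolding invertible_def matrix_inv_def by (rule someI_ex)
  have Hts: "H *v ts = q" unfolding ts_def using HH by (simp add: matrix_vector_mul_assoc)
  obtain v0 where v0: "v0 \<noteq> 0" "H *v v0 = L *\<^sub>R v0" using L_max unfolding is_largest_eigenvalue_def by blast
  have "v0 \<bullet> (H *v v0) > 0" using H_pd v0(1) by blast
  hence "L * (v0 \<bullet> v0) > 0" using v0(2) by simp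
  moreover have "v0 \<bullet> v0 > 0" using v0(1) by simp
  ultimately have L: "L > 0" by (simp add: zero_less_mult_iff)
  obtain B where Bfin: "finite B" and "pairwise orthogonal B" and Bn: "\<And>b. b \<in> B \<Longrightarrow> norm b = 1"
    and Bev: "\<And>b. b \<in> B \<Longrightarrow> H *v b = (b \<bullet> (H *v b)) *\<^sub>R b"
    and Bexp: "\<And>x. (\<Sum>b\<in>B. (x \<bullet> b) *\<^sub>R b) = x"
    using spectral[OF H_sym] by blast
  define lam where "lam b = b \<bullet> (H *v b)" for b
  have ev: "\<And>b. b \<in> B \<Longrightarrow> H *v b = lam b *\<^sub>R b" using Bev lam_def by simp
  have lpos: "lam b > 0" if "b \<in> B" for b
  proof -
    have "b \<noteq> 0" using Bn[OF that] by auto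
    thus ?thesis unfolding lam_def using H_pd by blast
  qed
  have lL: "lam b \<le> L" if "b \<in> B" for b
  proof -
    have "b \<noteq> 0" using Bn[OF that] by auto
    thus ?thesis using L_max ev[OF that] unfolding is_largest_eigenvalue_def by blast
  qed
  define n where "n = real N"
  have n1: "n \<ge> 1" using N_pos unfolding n_def by simp
  have al0: "\<alpha> = min (r / (sqrt (L*T) * real N)) (1/L)" using alpha_def unfolding r_def ts_def T_def .
  have alpos: "\<alpha> > 0" using al0 r T L N_pos by simp
  have alL: "\<alpha> \<le> 1/L" using al0 by simp
  have albe: "\<alpha> \<le> \<beta>" using beta_def alL N_pos alpos by (simp add: mult_le_cancel_right1)
  have beL: "\<beta> \<le> 1/L" using beta_def by simp
  have blam: "\<beta> * lam b \<le> 1" if "b \<in> B" for b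
  proof -
    have "\<beta> * lam b \<le> (1/L) * L" using beL lL[OF that] lpos[OF that] alpos albe L
      by (intro mult_mono) auto
    thus ?thesis using L by simp
  qed
  define sig where "sig b = b \<bullet> (C *v b)" for b
  have sig0: "sig b \<ge> 0" for b unfolding sig_def using C_psd .
  define th where "th w = noisy_alg H ts \<alpha> \<beta> th0 (\<lambda>n. eps n w) N" for w
  define X where "X b w = (real N * (b \<bullet> (th w - ts)))^2" for b w
  define G where "G b = Gs (\<alpha> * lam b) (\<beta> * lam b)" for b
  define EXP where "EXP b = (G b N * (b \<bullet> (th0 - ts)))^2
         + sig b * (\<Sum>j\<in>{1..<N}. (G b (N-j) * (real j*\<alpha>+\<beta>))^2)" for b
  have comp: "integrable M (X b) \<and> expectation (X b) = EXP b" if "b \<in> B" for b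
    unfolding X_def th_def EXP_def sig_def G_def
    by (rule eig_comp[OF eps_meas eps_L2 eps_mean eps_uncorr eps_cov H_sym ev[OF that] N_pos])
  have cb: "lam b * EXP b \<le> (b \<bullet> (th0 - ts))^2/\<alpha> + sig b*(n*\<alpha>+\<beta>)^2/(\<alpha>*\<beta>*lam b)" if "b \<in> B" for b
    unfolding EXP_def G_def n_def
    by (rule comp_bound) (use alpos albe lpos[OF that] blam[OF that] sig0 in auto)
  have fdec: "quad_obj H q (th w) = quad_obj H q ts + (\<Sum>b\<in>B. (lam b / (2*n^2)) * X b w)" for w
  proof -
    have "quad_obj H q (th w) - quad_obj H q ts = (1/2) * (\<Sum>b\<in>B. lam b * (b \<bullet> (th w - ts))^2)"
      by (rule quad_dec[OF H_sym Hts Bexp ev])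
    also have "\<dots> = (\<Sum>b\<in>B. (lam b / (2*n^2)) * X b w)"
      unfolding X_def sum_distrib_left using n1 unfolding n_def
      by (intro sum.cong refl) (simp add: power_mult_distrib field_simps)
    finally show ?thesis by simp
  qed
  have intX: "integrable M (\<lambda>w. \<Sum>b\<in>B. (lam b / (2*n^2)) * X b w)"
    using comp by (auto intro!: Bochner_Integration.integrable_sum)
  have "expectation (\<lambda>w. quad_obj H q (th w)) =
      expectation (\<lambda>w. quad_obj H q ts) + expectation (\<lambda>w. \<Sum>b\<in>B. (lam b / (2*n^2)) * X b w)"
    unfolding fdec using intX by (simp add: Bochner_Integration.integral_add)
  also have "expectation (\<lambda>w. \<Sum>b\<in>B. (lam b / (2*n^2)) * X b w) = (\<Sum>b\<in>B. (lam b / (2*n^2)) * EXP b)"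
    using comp by (simp add: Bochner_Integration.integral_sum)
  finally have E1: "expectation (\<lambda>w. quad_obj H q (th w)) - quad_obj H q ts = (\<Sum>b\<in>B. lam b * EXP b) / (2*n^2)"
    using prob_space by (simp add: sum_divide_distrib)
  have "(\<Sum>b\<in>B. lam b * EXP b) \<le> (\<Sum>b\<in>B. (b \<bullet> (th0 - ts))^2/\<alpha> + sig b*(n*\<alpha>+\<beta>)^2/(\<alpha>*\<beta>*lam b))"
    using cb by (rule sum_mono)
  also have "\<dots> = (\<Sum>b\<in>B. (b \<bullet> (th0 - ts))^2/\<alpha>) + (\<Sum>b\<in>B. sig b*(n*\<alpha>+\<beta>)^2/(\<alpha>*\<beta>*lam b))"
    by (rule sum.distrib)
  also have "(\<Sum>b\<in>B. (b \<bullet> (th0 - ts))^2/\<alpha>) = (\<Sum>b\<in>B. (b \<bullet> (th0 - ts))^2)/\<alpha>"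
    by (rule sum_divide_distrib[symmetric])
  also have "(\<Sum>b\<in>B. sig b*(n*\<alpha>+\<beta>)^2/(\<alpha>*\<beta>*lam b)) = (\<Sum>b\<in>B. (n*\<alpha>+\<beta>)^2/(\<alpha>*\<beta>) * (sig b / lam b))"
    by (rule sum.cong[OF refl]) simp
  also have "\<dots> = (n*\<alpha>+\<beta>)^2/(\<alpha>*\<beta>) * (\<Sum>b\<in>B. sig b / lam b)"
    by (rule sum_distrib_left[symmetric])
  also have "(\<Sum>b\<in>B. (b \<bullet> (th0 - ts))^2) = r^2"
    unfolding r_def power2_norm_eq_inner inner_expand[OF Bexp, of "th0 - ts" "th0 - ts"]
    by (simp add: power2_eq_square inner_commute)
  also have "(\<Sum>b\<in>B. sig b / lam b) = T"
  proof -
    have "trace (C ** matrix_inv H) = (\<Sum>b\<in>B. (b \<bullet> (C *v b)) / lam b)"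
    proof (rule trace_formula)
      show "matrix_inv H ** H = mat 1" using HH by simp
      show "\<And>x. (\<Sum>b\<in>B. (x \<bullet> b) *\<^sub>R b) = x" by (rule Bexp)
      show "\<And>b. b \<in> B \<Longrightarrow> H *v b = lam b *\<^sub>R b" by (rule ev)
      show "\<And>b. b \<in> B \<Longrightarrow> lam b \<noteq> 0" using lpos by fastforce
      show "finite B" by (rule Bfin)
    qed
    thus ?thesis unfolding T_def sig_def by simp
  qed
  finally have E2: "(\<Sum>b\<in>B. lam b * EXP b) \<le> r^2/\<alpha> + (n*\<alpha>+\<beta>)^2/(\<alpha>*\<beta>) * T" .
  have "expectation (\<lambda>w. quad_obj H q (th w)) - quad_obj H q ts \<le> (r^2/\<alpha> + (n*\<alpha>+\<beta>)^2/(\<alpha>*\<beta>) * T) / (2*n^2)"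
    unfolding E1 using E2 n1 by (simp add: divide_right_mono)
  also have "\<dots> \<le> max (5*T/real N) (max (5 * sqrt(T*L)*r/real N) (2*L*r^2/(real N)^2))"
    unfolding n_def by (rule final_ineq[OF r T L N_pos al0 beta_def])
  finally show ?thesis unfolding th_def ts_def T_def r_def .
qed


end
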